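(* Let $A\in\mathrm U(d)$. Then there is a unitary $B\in\mathrm U(d)$ such that $B^2=1_d$ and $\|B-A\|\le\|1_d-A^2\|$ for every unitarily invariant norm $\|\cdot\|$ on $\mathrm M_d(\mathbb C)$.
   Context: A norm $\|\cdot\|$ on $\mathrm M_d(\mathbb C)$ is unitarily invariant if $\|UAV\|=\|A\|$ for all $A\in\mathrm M_d(\mathbb C)$ and $U,V\in\mathrm U(d)$. *)

theory Defs
  imports "Jordan_Normal_Form.Schur_Decomposition"
begin

definition unitary_mat :: "nat \<Rightarrow> complex mat \<Rightarrow> bool" where
  "unitary_mat d U \<longleftrightarrow> U \<in> carrier_mat d d \<and>
     U * mat_adjoint U = 1\<^sub>m d \<and> mat_adjoint U * U = 1\<^sub>m d"

definition is_mat_norm :: "nat \<Rightarrow> (complex mat \<Rightarrow> real) \<Rightarrow> bool" where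
  "is_mat_norm d N \<longleftrightarrow>
     (\<forall>A \<in> carrier_mat d d. N A \<ge> 0) \<and>
     (\<forall>A \<in> carrier_mat d d. N A = 0 \<longleftrightarrow> A = 0\<^sub>m d d) \<and>
     (\<forall>A \<in> carrier_mat d d. \<forall>c. N (c \<cdot>\<^sub>m A) = cmod c * N A) \<and>
     (\<forall>A \<in> carrier_mat d d. \<forall>B \<in> carrier_mat d d. N (A + B) \<le> N A + N B)"

definition unitarily_invariant_norm :: "nat \<Rightarrow> (complex mat \<Rightarrow> real) \<Rightarrow> bool" where
  "unitarily_invariant_norm d N \<longleftrightarrow> is_mat_norm d N \<and>
     (\<forall>A \<in> carrier_mat d d. \<forall>U V. unitary_mat d U \<longrightarrow> unitary_mat d V \<longrightarrow>
        N (U * A * V) = N A)"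

end

theory Submission
  imports Defs "Jordan_Normal_Form.Spectral_Radius"
begin


lemma adj_dims[simp]:
  "dim_row (mat_adjoint A) = dim_col A" "dim_col (mat_adjoint A) = dim_row A"
  unfolding mat_adjoint_def by auto

lemma adj_index[simp]:
  "i < dim_col A \<Longrightarrow> j < dim_row A \<Longrightarrow> mat_adjoint A $$ (i,j) = cnj (A $$ (j,i))"
  unfolding mat_adjoint_def by (simp add: mat_of_rows_index)

lemma adj_carrier[simp]: "A \<in> carrier_mat n m \<Longrightarrow> mat_adjoint A \<in> carrier_mat m n"
  unfolding carrier_mat_def by auto

lemma adj_adj[simp]: "mat_adjoint (mat_adjoint (A::complex mat)) = A"
  by (rule eq_matI, auto)

lemma adj_mult:
  fixes A B :: "complex mat"
  assumes "A \<in> carrier_mat n k" "B \<in> carrier_mat k m"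
  shows "mat_adjoint (A * B) = mat_adjoint B * mat_adjoint A"
  using assms by (intro eq_matI) (auto simp: scalar_prod_def sum_conjugate mult.commute intro!: sum.cong)

lemma adj_one[simp]: "mat_adjoint (1\<^sub>m n :: complex mat) = 1\<^sub>m n"
  by (rule eq_matI, auto)

lemma adj_minus:
  fixes A B :: "complex mat"
  assumes "A \<in> carrier_mat n m" "B \<in> carrier_mat n m"
  shows "mat_adjoint (A - B) = mat_adjoint A - mat_adjoint B"
  using assms by (intro eq_matI) auto

definition dg :: "nat \<Rightarrow> (nat \<Rightarrow> complex) \<Rightarrow> complex mat" where
  "dg n f = mat n n (\<lambda>(i,j). if i = j then f i else 0)"

lemma dg_carrier[simp]: "dg n f \<in> carrier_mat n n" and dg_dims[simp]: "dim_row (dg n f) = n" "dim_col (dg n f) = n"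
  unfolding dg_def by auto

lemma dg_index[simp]: "i < n \<Longrightarrow> j < n \<Longrightarrow> dg n f $$ (i,j) = (if i = j then f i else 0)"
  unfolding dg_def by auto

lemma dg_mult_left:
  assumes "X \<in> carrier_mat n m"
  shows "dg n f * X = mat n m (\<lambda>(i,j). f i * X $$ (i,j))"
proof (rule eq_matI)
  fix i j assume ij: "i < dim_row (mat n m (\<lambda>(i,j). f i * X $$ (i,j)))" "j < dim_col (mat n m (\<lambda>(i,j). f i * X $$ (i,j)))"
  hence i: "i < n" and j: "j < m" by auto
  have "(dg n f * X) $$ (i,j) = (\<Sum>k = 0..<n. (if i = k then f i else 0) * X $$ (k,j))"
    using assms i j by (auto simp: scalar_prod_def intro!: sum.cong)
  also have "\<dots> = (\<Sum>k = 0..<n. (if k = i then f i * X $$ (k,j) else 0))"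
    by (rule sum.cong) auto
  also have "\<dots> = f i * X $$ (i,j)" using i by (simp add: sum.delta)
  finally show "(dg n f * X) $$ (i,j) = mat n m (\<lambda>(i,j). f i * X $$ (i,j)) $$ (i,j)" using i j by simp
qed (use assms in auto)

lemma dg_mult_dg: "dg n f * dg n g = dg n (\<lambda>i. f i * g i)"
  by (subst dg_mult_left[of _ n n], simp, rule eq_matI, auto)

lemma adj_dg[simp]: "mat_adjoint (dg n f) = dg n (\<lambda>i. cnj (f i))"
  by (rule eq_matI, auto)

lemma dg_one: "dg n (\<lambda>_. 1) = 1\<^sub>m n"
  by (rule eq_matI, auto)

lemma dg_minus: "dg n f - dg n g = dg n (\<lambda>i. f i - g i)"
  by (rule eq_matI, auto)

lemma unitary_carrier: "unitary_mat n U \<Longrightarrow> U \<in> carrier_mat n n"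
  unfolding unitary_mat_def by auto

lemma mult4:
  fixes A B C D :: "complex mat"
  assumes "A \<in> carrier_mat n n" "B \<in> carrier_mat n n" "C \<in> carrier_mat n n" "D \<in> carrier_mat n n"
  shows "A * B * (C * D) = A * (B * C) * D"
proof -
  have "A * B * (C * D) = A * (B * (C * D))" using assms by (simp add: assoc_mult_mat[of _ n n _ n _ n])
  also have "B * (C * D) = B * C * D" using assms by (simp add: assoc_mult_mat[of _ n n _ n _ n])
  also have "A * (B * C * D) = A * (B * C) * D" using assms by (simp add: assoc_mult_mat[of _ n n _ n _ n])
  finally show ?thesis .
qed

lemma unitary_mult:
  assumes U: "unitary_mat n U" and V: "unitary_mat n V"
  shows "unitary_mat n (U * V)"
proof -
  have Uc: "U \<in> carrier_mat n n" and Vc: "V \<in> carrier_mat n n"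
    and u1: "U * mat_adjoint U = 1\<^sub>m n" and u2: "mat_adjoint U * U = 1\<^sub>m n"
    and v1: "V * mat_adjoint V = 1\<^sub>m n" and v2: "mat_adjoint V * V = 1\<^sub>m n"
    using U V unfolding unitary_mat_def by auto
  have a: "mat_adjoint (U * V) = mat_adjoint V * mat_adjoint U" using adj_mult[OF Uc Vc] .
  have "U * V * (mat_adjoint V * mat_adjoint U) = U * (V * mat_adjoint V) * mat_adjoint U"
    using Uc Vc by (intro mult4) auto
  also have "\<dots> = 1\<^sub>m n" using u1 v1 Uc by simp
  finally have 1: "U * V * mat_adjoint (U * V) = 1\<^sub>m n" using a by simp
  have "mat_adjoint V * mat_adjoint U * (U * V) = mat_adjoint V * (mat_adjoint U * U) * V"
    using Uc Vc by (intro mult4) auto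
  also have "\<dots> = 1\<^sub>m n" using u2 v2 Vc by simp
  finally have 2: "mat_adjoint (U * V) * (U * V) = 1\<^sub>m n" using a by simp
  show ?thesis unfolding unitary_mat_def using 1 2 Uc Vc by auto
qed

lemma unitary_adj:
  assumes "unitary_mat n U" shows "unitary_mat n (mat_adjoint U)"
  using assms unfolding unitary_mat_def by auto

lemma unitary_one: "unitary_mat n (1\<^sub>m n)"
  unfolding unitary_mat_def by auto

lemma unitary_dg: "(\<And>i. i < n \<Longrightarrow> cmod (f i) = 1) \<Longrightarrow> unitary_mat n (dg n f)"
  unfolding unitary_mat_def
  by (auto simp: dg_mult_dg intro!: eq_matI simp flip: complex_norm_square)
     (simp add: complex_norm_square[symmetric] mult.commute)

lemma uin_left:
  assumes N: "unitarily_invariant_norm n N" and U: "unitary_mat n U" and Y: "Y \<in> carrier_mat n n"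
  shows "N (U * Y) = N Y"
proof -
  have "N (U * Y * 1\<^sub>m n) = N Y" using N U Y unitary_one[of n]
    unfolding unitarily_invariant_norm_def by blast
  thus ?thesis using U Y unfolding unitary_mat_def by simp
qed

lemma uin_conj:
  assumes N: "unitarily_invariant_norm n N" and U: "unitary_mat n U" and Y: "Y \<in> carrier_mat n n"
  shows "N (U * Y * mat_adjoint U) = N Y"
  using N U Y unitary_adj[OF U] unfolding unitarily_invariant_norm_def by blast

lemma disk_split:
  assumes "cmod c \<le> 1"
  shows "\<exists>u v. cmod u = 1 \<and> cmod v = 1 \<and> c = (u + v) / 2"
proof -
  define r where "r = sqrt (1 - (cmod c)\<^sup>2)"
  define w where "w = (if c = 0 then 1 else c / complex_of_real (cmod c))"
  have w1: "cmod w = 1" unfolding w_def by (auto simp: norm_divide)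
  have cw: "c = w * complex_of_real (cmod c)" unfolding w_def by auto
  have r2: "r\<^sup>2 = 1 - (cmod c)\<^sup>2" unfolding r_def using assms
    by (simp add: abs_square_le_1 norm_ge_zero power_le_one)
  have m1: "cmod (Complex (cmod c) r) = 1" "cmod (Complex (cmod c) (-r)) = 1"
    using r2 by (auto simp: cmod_def)
  show ?thesis
  proof (intro exI conjI)
    show "cmod (w * Complex (cmod c) r) = 1" using w1 m1 by (simp add: norm_mult)
    show "cmod (w * Complex (cmod c) (-r)) = 1" using w1 m1 by (simp add: norm_mult)
    show "c = (w * Complex (cmod c) r + w * Complex (cmod c) (- r)) / 2"
      apply (subst cw) by (simp add: complex_eq_iff field_simps)
  qed
qed

lemma one_coord:
  assumes N: "unitarily_invariant_norm n N" and Y: "Y \<in> carrier_mat n n" and c: "cmod c \<le> 1"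
  shows "N (dg n (\<lambda>i. if i = k then c else 1) * Y) \<le> N Y"
proof -
  obtain u v where u: "cmod u = 1" and v: "cmod v = 1" and cuv: "c = (u + v) / 2"
    using disk_split[OF c] by blast
  define Du where "Du = dg n (\<lambda>i. if i = k then u else 1)"
  define Dv where "Dv = dg n (\<lambda>i. if i = k then v else 1)"
  have Du: "unitary_mat n Du" unfolding Du_def by (rule unitary_dg) (auto simp: u)
  have Dv: "unitary_mat n Dv" unfolding Dv_def by (rule unitary_dg) (auto simp: v)
  have eq: "dg n (\<lambda>i. if i = k then c else 1) * Y = (1/2) \<cdot>\<^sub>m (Du * Y + Dv * Y)"
    unfolding Du_def Dv_def using Y
    by (simp add: dg_mult_left[OF Y]) (rule eq_matI, auto simp: cuv field_simps)
  have c1: "Du * Y \<in> carrier_mat n n" "Dv * Y \<in> carrier_mat n n" "Du * Y + Dv * Y \<in> carrier_mat n n"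
    using unitary_carrier[OF Du] unitary_carrier[OF Dv] Y by auto
  have nm: "is_mat_norm n N" using N unfolding unitarily_invariant_norm_def by auto
  have "N ((1/2) \<cdot>\<^sub>m (Du * Y + Dv * Y)) = 1/2 * N (Du * Y + Dv * Y)"
    using nm c1 unfolding is_mat_norm_def by auto
  also have "\<dots> \<le> 1/2 * (N (Du * Y) + N (Dv * Y))"
    using nm c1 unfolding is_mat_norm_def by auto
  also have "\<dots> = N Y" using uin_left[OF N Du Y] uin_left[OF N Dv Y] by simp
  finally show ?thesis unfolding eq .
qed

lemma contraction:
  assumes N: "unitarily_invariant_norm n N" and Y: "Y \<in> carrier_mat n n"
    and t: "\<And>i. i < n \<Longrightarrow> cmod (t i) \<le> 1"
  shows "N (dg n t * Y) \<le> N Y"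
proof -
  have main: "\<forall>t Y. (\<forall>i. k \<le> i \<longrightarrow> t i = 1) \<longrightarrow> (\<forall>i. cmod (t i) \<le> 1) \<longrightarrow> Y \<in> carrier_mat n n
      \<longrightarrow> N (dg n t * Y) \<le> N Y" for k
  proof (induction k)
    case 0
    show ?case
    proof (intro allI impI)
      fix t :: "nat \<Rightarrow> complex" and Y :: "complex mat" assume "\<forall>i. 0 \<le> i \<longrightarrow> t i = 1" "Y \<in> carrier_mat n n"
      hence "t = (\<lambda>_. 1)" by auto
      thus "N (dg n t * Y) \<le> N Y" using \<open>Y \<in> carrier_mat n n\<close> by (simp add: dg_one)
    qed
  next
    case (Suc k)
    show ?case
    proof (intro allI impI)
      fix t :: "nat \<Rightarrow> complex" and Y :: "complex mat"
      assume t1: "\<forall>i. Suc k \<le> i \<longrightarrow> t i = 1" and tb: "\<forall>i. cmod (t i) \<le> 1" and Y: "Y \<in> carrier_mat n n"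
      define t' where "t' = t(k := 1)"
      define s where "s = (\<lambda>i. if i = k then t k else 1)"
      have split: "dg n t = dg n t' * dg n s" unfolding dg_mult_dg
        by (rule arg_cong[of _ _ "dg n"]) (auto simp: t'_def s_def)
      have sY: "dg n s * Y \<in> carrier_mat n n" by (rule mult_carrier_mat[OF dg_carrier Y])
      have "dg n t * Y = dg n t' * (dg n s * Y)" unfolding split using Y
        by (simp add: assoc_mult_mat[of _ n n _ n _ n])
      also have "N \<dots> \<le> N (dg n s * Y)"
        using Suc.IH[rule_format, of t' "dg n s * Y"] t1 tb sY
        by (auto simp: t'_def)
      also have "\<dots> \<le> N Y" unfolding s_def using one_coord[OF N Y, of "t k" k] tb by auto
      finally show "N (dg n t * Y) \<le> N Y" .
    qed
  qed
  define t' where "t' = (\<lambda>i. if i < n then t i else 1)"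
  have "dg n t' = dg n t" unfolding t'_def by (rule eq_matI) auto
  moreover have "N (dg n t' * Y) \<le> N Y"
    using main[of n, rule_format, of t' Y] Y t unfolding t'_def by auto
  ultimately show ?thesis by simp
qed



lemma dg_mult_right:
  assumes "X \<in> carrier_mat m n"
  shows "X * dg n f = mat m n (\<lambda>(i,j). X $$ (i,j) * f j)"
proof (rule eq_matI)
  fix i j assume ij: "i < dim_row (mat m n (\<lambda>(i,j). X $$ (i,j) * f j))" "j < dim_col (mat m n (\<lambda>(i,j). X $$ (i,j) * f j))"
  hence i: "i < m" and j: "j < n" by auto
  have "(X * dg n f) $$ (i,j) = (\<Sum>k = 0..<n. X $$ (i,k) * (if k = j then f j else 0))"
    using assms i j by (auto simp: scalar_prod_def intro!: sum.cong)
  also have "\<dots> = (\<Sum>k = 0..<n. (if k = j then X $$ (i,k) * f j else 0))"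
    by (rule sum.cong) auto
  also have "\<dots> = X $$ (i,j) * f j" using j by (simp add: sum.delta)
  finally show "(X * dg n f) $$ (i,j) = mat m n (\<lambda>(i,j). X $$ (i,j) * f j) $$ (i,j)" using i j by simp
qed (use assms in auto)

lemma cscalar_self: "v \<bullet>c v = complex_of_real (\<Sum>k = 0..<dim_vec v. (cmod (v $ k))\<^sup>2)"
proof -
  have "v \<bullet>c v = (\<Sum>k = 0..<dim_vec v. complex_of_real ((cmod (v $ k))\<^sup>2))"
    unfolding scalar_prod_def
    by (rule sum.cong, simp, subst vec_index_conjugate, simp, simp only: conjugate_complex_def complex_norm_square)
  thus ?thesis by (simp only: of_real_sum)
qed

lemma unitary_completion:
  fixes v :: "complex vec"
  assumes v: "v \<in> carrier_vec n" and v0: "v \<noteq> 0\<^sub>v n"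
  shows "\<exists>W c. unitary_mat n W \<and> c \<noteq> 0 \<and> col W 0 = c \<cdot>\<^sub>v v"
proof -
  interpret cof_vec_space n "TYPE(complex)" .
  have n0: "n > 0" using v v0 by (cases n) auto
  define bs where "bs = basis_completion v"
  note bc = basis_completion[OF v v0, folded bs_def]
  define ws where "ws = gram_schmidt n bs"
  note gs = gram_schmidt_result[OF bc(2) bc(4) bc(5) ws_def]
  have len: "length ws = n" using gs(4) bc(6) by simp
  have wsc: "\<And>i. i < n \<Longrightarrow> ws ! i \<in> carrier_vec n" using gs(3) len by auto
  have bsv: "bs = v # tl bs" using bc(7) bc(6) n0 by (cases bs) auto
  have hd: "hd ws = v" unfolding ws_def by (subst bsv, rule gram_schmidt_hd[OF v])
  have ws0: "ws ! 0 = v" using hd n0 len by (cases ws) auto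
  have orth: "\<And>i j. i < n \<Longrightarrow> j < n \<Longrightarrow> (ws ! i \<bullet>c ws ! j = 0) = (i \<noteq> j)"
    using gs(2) len unfolding corthogonal_def by auto
  define r where "r i = (\<Sum>k = 0..<n. (cmod (ws ! i $ k))\<^sup>2)" for i
  have gr: "ws ! i \<bullet>c ws ! i = complex_of_real (r i)" if "i < n" for i
    using cscalar_self[of "ws ! i"] wsc[OF that] unfolding r_def by auto
  have rpos: "r i > 0" if "i < n" for i
  proof -
    have "r i \<ge> 0" unfolding r_def by (intro sum_nonneg) auto
    moreover have "r i \<noteq> 0" using gr[OF that] orth[OF that that] by auto
    ultimately show ?thesis by auto
  qed
  define s where "s i = complex_of_real (1 / sqrt (r i))" for i
  define W0 where "W0 = mat_of_cols n ws"
  have W0c: "W0 \<in> carrier_mat n n" unfolding W0_def using len by auto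
  define W where "W = W0 * dg n s"
  have Wc: "W \<in> carrier_mat n n" unfolding W_def using W0c by auto
  have Widx: "W $$ (k,i) = ws ! i $ k * s i" if "k < n" "i < n" for k i
    unfolding W_def dg_mult_right[OF W0c] using that len by (simp add: W0_def mat_of_cols_index)
  have "mat_adjoint W * W = 1\<^sub>m n"
  proof (rule eq_matI)
    fix i j assume "i < dim_row (1\<^sub>m n :: complex mat)" "j < dim_col (1\<^sub>m n :: complex mat)"
    hence i: "i < n" and j: "j < n" by auto
    have "(mat_adjoint W * W) $$ (i,j) = (\<Sum>k = 0..<n. cnj (W $$ (k,i)) * W $$ (k,j))"
      using Wc i j by (auto simp: scalar_prod_def intro!: sum.cong)
    also have "\<dots> = (\<Sum>k = 0..<n. (cnj (s i) * s j) * (ws ! j $ k * cnj (ws ! i $ k)))"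
      using i j by (intro sum.cong) (auto simp: Widx)
    also have "\<dots> = (cnj (s i) * s j) * (ws ! j \<bullet>c ws ! i)"
      using wsc[OF i] wsc[OF j] by (simp add: scalar_prod_def sum_distrib_left)
    also have "\<dots> = 1\<^sub>m n $$ (i,j)"
    proof (cases "i = j")
      case True
      have sq: "sqrt (r i) * sqrt (r i) = r i" using rpos[OF i] by simp
      have rr: "1 / sqrt (r i) * (1 / sqrt (r i)) * r i = 1"
        using sq rpos[OF i] by (simp add: divide_simps)
      have "cnj (s i) * s i * complex_of_real (r i) = complex_of_real ((1 / sqrt (r i)) * (1 / sqrt (r i)) * r i)"
        unfolding s_def by (simp only: complex_cnj_complex_of_real of_real_mult)
      also have "\<dots> = 1" unfolding rr by simp
      finally have "cnj (s i) * s i * complex_of_real (r i) = 1" .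
      moreover have "1\<^sub>m n $$ (i,j) = (1::complex)" using True i by simp
      ultimately show ?thesis using True gr[OF i] by metis
    next
      case False
      have "ws ! j \<bullet>c ws ! i = 0" using orth[OF j i] False by auto
      moreover have "1\<^sub>m n $$ (i,j) = (0::complex)" using False i j by simp
      ultimately show ?thesis by simp
    qed
    finally show "(mat_adjoint W * W) $$ (i,j) = 1\<^sub>m n $$ (i,j)" .
  qed (use Wc in auto)
  moreover have "W * mat_adjoint W = 1\<^sub>m n"
    by (rule mat_mult_left_right_inverse[OF _ Wc]) (use Wc calculation in auto)
  ultimately have U: "unitary_mat n W" unfolding unitary_mat_def using Wc by auto
  have "col W 0 = s 0 \<cdot>\<^sub>v v"
  proof (rule eq_vecI)
    fix k assume "k < dim_vec (s 0 \<cdot>\<^sub>v v)"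
    hence k: "k < n" using v by auto
    show "col W 0 $ k = (s 0 \<cdot>\<^sub>v v) $ k" using Wc k n0 v Widx[OF k n0] ws0 by (simp add: mult.commute)
  qed (use Wc v in auto)
  moreover have "s 0 \<noteq> 0" unfolding s_def using rpos[OF n0] by auto
  ultimately show ?thesis using U by blast
qed



definition lift :: "complex \<Rightarrow> complex mat \<Rightarrow> complex mat" where
  "lift a X = four_block_mat (mat 1 1 (\<lambda>_. a)) (0\<^sub>m 1 (dim_col X)) (0\<^sub>m (dim_row X) 1) X"

lemma lift_dims[simp]: "dim_row (lift a X) = Suc (dim_row X)" "dim_col (lift a X) = Suc (dim_col X)"
  unfolding lift_def by auto

lemma lift_carrier[simp]: "X \<in> carrier_mat m m \<Longrightarrow> lift a X \<in> carrier_mat (Suc m) (Suc m)"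
  unfolding carrier_mat_def by auto

lemma lift_index[simp]:
  assumes "i < Suc (dim_row X)" "j < Suc (dim_col X)"
  shows "lift a X $$ (i,j) = (if i = 0 \<and> j = 0 then a else if i = 0 \<or> j = 0 then 0 else X $$ (i - 1, j - 1))"
  using assms unfolding lift_def by auto

lemma lift_mult:
  assumes X: "X \<in> carrier_mat m m" and Y: "Y \<in> carrier_mat m m"
  shows "lift a X * lift b Y = lift (a * b) (X * Y)"
proof -
  have "lift a X * lift b Y = four_block_mat (mat 1 1 (\<lambda>_. a) * mat 1 1 (\<lambda>_. b) + 0\<^sub>m 1 m * 0\<^sub>m m 1)
     (mat 1 1 (\<lambda>_. a) * 0\<^sub>m 1 m + 0\<^sub>m 1 m * Y) (0\<^sub>m m 1 * mat 1 1 (\<lambda>_. b) + X * 0\<^sub>m m 1)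
     (0\<^sub>m m 1 * 0\<^sub>m 1 m + X * Y)"
    unfolding lift_def using X Y by (subst mult_four_block_mat[of _ 1 1 _ m _ m]) auto
  also have "mat 1 1 (\<lambda>_. a) * mat 1 1 (\<lambda>_. b) + 0\<^sub>m 1 m * 0\<^sub>m m 1 = mat 1 1 (\<lambda>_. a * b)"
    by (rule eq_matI) (auto simp: scalar_prod_def)
  also have "mat 1 1 (\<lambda>_. a) * 0\<^sub>m 1 m + 0\<^sub>m 1 m * Y = 0\<^sub>m 1 m"
    using Y by (simp add: right_mult_zero_mat left_mult_zero_mat)
  also have "0\<^sub>m m 1 * mat 1 1 (\<lambda>_. b) + X * 0\<^sub>m m 1 = 0\<^sub>m m 1"
    using X by (simp add: right_mult_zero_mat left_mult_zero_mat)
  also have "0\<^sub>m m 1 * 0\<^sub>m 1 m + X * Y = X * Y"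
    using X Y by (simp add: left_mult_zero_mat)
  finally show ?thesis unfolding lift_def using X Y by simp
qed

lemma lift_adj:
  "mat_adjoint (lift a X) = lift (cnj a) (mat_adjoint X)"
  by (rule eq_matI) auto

lemma lift_one: "lift 1 (1\<^sub>m m) = 1\<^sub>m (Suc m)"
  by (rule eq_matI) auto

lemma lift_dg: "lift a (dg m f) = dg (Suc m) (\<lambda>i. if i = 0 then a else f (i - 1))"
  by (rule eq_matI) auto

lemma lift_inj:
  assumes X: "X \<in> carrier_mat m m" and Y: "Y \<in> carrier_mat m m" and eq: "lift a X = lift b Y"
  shows "X = Y"
proof (rule eq_matI)
  fix i j assume "i < dim_row Y" "j < dim_col Y"
  hence i: "i < m" and j: "j < m" using Y by auto
  have "lift a X $$ (Suc i, Suc j) = lift b Y $$ (Suc i, Suc j)" using eq by simp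
  thus "X $$ (i,j) = Y $$ (i,j)" using X Y i j by simp
qed (use X Y in auto)

lemma unitary_lift:
  assumes "unitary_mat m U" "cmod a = 1"
  shows "unitary_mat (Suc m) (lift a U)"
proof -
  have U: "U \<in> carrier_mat m m" and u1: "U * mat_adjoint U = 1\<^sub>m m" and u2: "mat_adjoint U * U = 1\<^sub>m m"
    using assms unfolding unitary_mat_def by auto
  have a1: "a * cnj a = 1" "cnj a * a = 1" using assms(2)
    by (simp_all add: complex_norm_square[symmetric] mult.commute)
  have "lift a U * mat_adjoint (lift a U) = 1\<^sub>m (Suc m)"
    unfolding lift_adj lift_mult[OF U adj_carrier[OF U]] u1 a1 lift_one ..
  moreover have "mat_adjoint (lift a U) * lift a U = 1\<^sub>m (Suc m)"
    unfolding lift_adj lift_mult[OF adj_carrier[OF U] U] u2 a1 lift_one ..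
  ultimately show ?thesis using U unfolding unitary_mat_def by simp
qed



lemma unitary_split:
  assumes U: "unitary_mat (Suc m) B"
    and col0: "\<And>i. i < Suc m \<Longrightarrow> B $$ (i,0) = (if i = 0 then e else 0)"
  shows "\<exists>B3. B = lift e B3 \<and> unitary_mat m B3 \<and> cmod e = 1"
proof -
  have Bc: "B \<in> carrier_mat (Suc m) (Suc m)" and b1: "B * mat_adjoint B = 1\<^sub>m (Suc m)"
    and b2: "mat_adjoint B * B = 1\<^sub>m (Suc m)" using U unfolding unitary_mat_def by auto
  have "(mat_adjoint B * B) $$ (0,0) = (\<Sum>k = 0..<Suc m. cnj (B $$ (k,0)) * B $$ (k,0))"
    using Bc by (auto simp: scalar_prod_def intro!: sum.cong)
  also have "\<dots> = (\<Sum>k = 0..<Suc m. if k = 0 then cnj e * e else 0)"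
    by (rule sum.cong) (auto simp: col0)
  also have "\<dots> = cnj e * e" by (simp add: sum.delta)
  finally have "cnj e * e = 1" using b2 by simp
  hence "complex_of_real ((cmod e)\<^sup>2) = 1"
    by (simp only: complex_norm_square, simp add: mult.commute)
  hence "(cmod e)\<^sup>2 = 1" by (simp only: of_real_eq_1_iff)
  hence e1: "cmod e = 1" using norm_ge_zero[of e] by (simp add: power2_eq_1_iff)
  have "(B * mat_adjoint B) $$ (0,0) = (\<Sum>k = 0..<Suc m. B $$ (0,k) * cnj (B $$ (0,k)))"
    using Bc by (auto simp: scalar_prod_def intro!: sum.cong)
  also have "\<dots> = (\<Sum>k = 0..<Suc m. complex_of_real ((cmod (B $$ (0,k)))\<^sup>2))"
    by (rule sum.cong, simp, simp only: complex_norm_square)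
  also have "\<dots> = complex_of_real (\<Sum>k = 0..<Suc m. (cmod (B $$ (0,k)))\<^sup>2)"
    by (simp only: of_real_sum)
  finally have h: "(B * mat_adjoint B) $$ (0,0) = complex_of_real (\<Sum>k = 0..<Suc m. (cmod (B $$ (0,k)))\<^sup>2)" .
  have "(B * mat_adjoint B) $$ (0,0) = 1" using b1 by simp
  hence "complex_of_real (\<Sum>k = 0..<Suc m. (cmod (B $$ (0,k)))\<^sup>2) = 1" using h by (simp only:)
  hence "(\<Sum>k = 0..<Suc m. (cmod (B $$ (0,k)))\<^sup>2) = 1" by (simp only: of_real_eq_1_iff)
  also have "(\<Sum>k = 0..<Suc m. (cmod (B $$ (0,k)))\<^sup>2) = (cmod (B $$ (0,0)))\<^sup>2 + (\<Sum>k<m. (cmod (B $$ (0,Suc k)))\<^sup>2)"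
    by (simp only: atLeast0LessThan sum.lessThan_Suc_shift)
  finally have "(\<Sum>k<m. (cmod (B $$ (0,Suc k)))\<^sup>2) = 0" using col0[of 0] e1 by simp
  hence row0: "B $$ (0, Suc k) = 0" if "k < m" for k
    using that by (subst (asm) sum_nonneg_eq_0_iff) auto
  define B3 where "B3 = mat m m (\<lambda>(i,j). B $$ (Suc i, Suc j))"
  have B3c: "B3 \<in> carrier_mat m m" unfolding B3_def by auto
  have Beq: "B = lift e B3"
  proof (rule eq_matI)
    fix i j assume "i < dim_row (lift e B3)" "j < dim_col (lift e B3)"
    hence i: "i < Suc m" and j: "j < Suc m" using B3c by auto
    show "B $$ (i,j) = lift e B3 $$ (i,j)"
    proof (cases "i = 0")
      case True
      thus ?thesis using j B3c col0[of 0] row0[of "j - 1"] by (cases j) auto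
    next
      case False
      thus ?thesis using i j B3c col0[of i] by (cases j) (auto simp: B3_def)
    qed
  qed (use Bc B3c in auto)
  have ce: "e * cnj e = 1" "cnj e * e = 1" using \<open>cnj e * e = 1\<close> by (simp_all add: mult.commute)
  have h1: "lift 1 (B3 * mat_adjoint B3) = lift 1 (1\<^sub>m m)"
    using b1 unfolding Beq lift_adj lift_mult[OF B3c adj_carrier[OF B3c]] ce lift_one .
  have 1: "B3 * mat_adjoint B3 = 1\<^sub>m m"
    by (rule lift_inj[OF mult_carrier_mat[OF B3c adj_carrier[OF B3c]] one_carrier_mat h1])
  have h2: "lift 1 (mat_adjoint B3 * B3) = lift 1 (1\<^sub>m m)"
    using b2 unfolding Beq lift_adj lift_mult[OF adj_carrier[OF B3c] B3c] ce lift_one .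
  have 2: "mat_adjoint B3 * B3 = 1\<^sub>m m"
    by (rule lift_inj[OF mult_carrier_mat[OF adj_carrier[OF B3c] B3c] one_carrier_mat h2])
  show ?thesis using Beq 1 2 B3c e1 unfolding unitary_mat_def by auto
qed


lemma mult3_assoc:
  fixes W X Y Z V :: "complex mat"
  assumes "W \<in> carrier_mat n n" "X \<in> carrier_mat n n" "Y \<in> carrier_mat n n" "Z \<in> carrier_mat n n" "V \<in> carrier_mat n n"
  shows "W * (X * Y * Z) * V = (W * X) * Y * (Z * V)"
  using assms by (simp add: assoc_mult_mat[of _ n n _ n _ n])

lemma unitary_conj_back:
  assumes W: "unitary_mat n W" and A: "A \<in> carrier_mat n n"
  shows "W * (mat_adjoint W * A * W) * mat_adjoint W = A"
proof -
  have Wc: "W \<in> carrier_mat n n" and w1: "W * mat_adjoint W = 1\<^sub>m n"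
    using W unfolding unitary_mat_def by auto
  have "W * (mat_adjoint W * A * W) * mat_adjoint W = (W * mat_adjoint W) * A * (W * mat_adjoint W)"
    by (rule mult3_assoc) (use Wc A in auto)
  also have "\<dots> = A" using w1 A by simp
  finally show ?thesis .
qed

lemma spectral_unitary:
  "unitary_mat n A \<Longrightarrow> \<exists>U f. unitary_mat n U \<and> A = U * dg n f * mat_adjoint U"
proof (induction n arbitrary: A)
  case 0
  hence Ac: "A \<in> carrier_mat 0 0" using unitary_carrier by auto
  show ?case
  proof (intro exI conjI)
    show "unitary_mat 0 (1\<^sub>m 0)" by (rule unitary_one)
    show "A = 1\<^sub>m 0 * dg 0 (\<lambda>_. 0) * mat_adjoint (1\<^sub>m 0)"
      by (rule eq_matI) (use Ac in auto)
  qed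
next
  case (Suc m)
  have U: "unitary_mat (Suc m) A" by fact
  have Ac: "A \<in> carrier_mat (Suc m) (Suc m)" using U unitary_carrier by auto
  obtain e where "e \<in> spectrum A" using spectrum_non_empty[OF Ac] by auto
  hence "eigenvalue A e" unfolding spectrum_def by auto
  hence ev: "eigenvector A (find_eigenvector A e) e" by (rule find_eigenvector[OF Ac])
  define v where "v = find_eigenvector A e"
  have v: "v \<in> carrier_vec (Suc m)" "v \<noteq> 0\<^sub>v (Suc m)" and Av: "A *\<^sub>v v = e \<cdot>\<^sub>v v"
    using ev Ac unfolding eigenvector_def v_def by auto
  obtain W c where W: "unitary_mat (Suc m) W" and c: "c \<noteq> 0" and Wcol: "col W 0 = c \<cdot>\<^sub>v v"
    using unitary_completion[OF v] by blast
  have Wc: "W \<in> carrier_mat (Suc m) (Suc m)" and w2: "mat_adjoint W * W = 1\<^sub>m (Suc m)"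
    using W unfolding unitary_mat_def by auto
  define B where "B = mat_adjoint W * A * W"
  have BU: "unitary_mat (Suc m) B" unfolding B_def
    by (intro unitary_mult unitary_adj W U)
  have colAW: "col (A * W) 0 = e \<cdot>\<^sub>v col W 0"
  proof -
    have "col (A * W) 0 = A *\<^sub>v col W 0" by (rule col_mult2[OF Ac Wc]) simp
    also have "\<dots> = c \<cdot>\<^sub>v (A *\<^sub>v v)" unfolding Wcol using Ac v by (simp add: mult_mat_vec)
    also have "\<dots> = e \<cdot>\<^sub>v col W 0" unfolding Av Wcol
      by (rule eq_vecI) (use v in auto)
    finally show ?thesis .
  qed
  have col0: "B $$ (i,0) = (if i = 0 then e else 0)" if i: "i < Suc m" for i
  proof -
    have "B = mat_adjoint W * (A * W)" unfolding B_def using Ac Wc by (simp add: assoc_mult_mat[of _ "Suc m" "Suc m" _ "Suc m" _ "Suc m"])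
    hence "B $$ (i,0) = row (mat_adjoint W) i \<bullet> col (A * W) 0" using Ac Wc i by simp
    also have "\<dots> = e * (row (mat_adjoint W) i \<bullet> col W 0)" unfolding colAW
      using Wc i by simp
    also have "row (mat_adjoint W) i \<bullet> col W 0 = (mat_adjoint W * W) $$ (i,0)" using Wc i by simp
    also have "\<dots> = (if i = 0 then 1 else 0)" unfolding w2 using i by simp
    finally show ?thesis by simp
  qed
  obtain B3 where Beq: "B = lift e B3" and B3U: "unitary_mat m B3" and e1: "cmod e = 1"
    using unitary_split[OF BU col0] by blast
  obtain U3 f3 where U3: "unitary_mat m U3" and B3eq: "B3 = U3 * dg m f3 * mat_adjoint U3"
    using Suc.IH[OF B3U] by blast
  have U3c: "U3 \<in> carrier_mat m m" using U3 unitary_carrier by auto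
  define L where "L = lift 1 U3"
  define f where "f = (\<lambda>i. if i = 0 then e else f3 (i - 1))"
  have LU: "unitary_mat (Suc m) L" unfolding L_def by (rule unitary_lift[OF U3]) simp
  have Lc: "L \<in> carrier_mat (Suc m) (Suc m)" using LU unitary_carrier by auto
  have "B = L * dg (Suc m) f * mat_adjoint L"
    unfolding Beq B3eq L_def lift_adj f_def
    by (simp add: lift_dg[symmetric] lift_mult[OF U3c dg_carrier]
        lift_mult[OF mult_carrier_mat[OF U3c dg_carrier] adj_carrier[OF U3c]])
  hence "A = W * (L * dg (Suc m) f * mat_adjoint L) * mat_adjoint W"
    using unitary_conj_back[OF W Ac] unfolding B_def by simp
  also have "\<dots> = (W * L) * dg (Suc m) f * (mat_adjoint L * mat_adjoint W)"
    by (rule mult3_assoc) (use Wc Lc in auto)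
  also have "mat_adjoint L * mat_adjoint W = mat_adjoint (W * L)"
    using adj_mult[OF Wc Lc] by simp
  finally show ?case using unitary_mult[OF W LU] by blast
qed



definition sgn_re :: "complex \<Rightarrow> complex" where
  "sgn_re z = (if 0 \<le> Re z then 1 else -1)"

definition tcoef :: "complex \<Rightarrow> complex" where
  "tcoef z = (if 0 \<le> Re z then 1 / (1 + z) else - 1 / (1 - z))"

lemma tcoef_eq: "sgn_re z - z = tcoef z * (1 - z * z)"
proof (cases "0 \<le> Re z")
  case True
  hence nz: "1 + z \<noteq> 0" by (auto simp: complex_eq_iff)
  have "1 - z * z = (1 - z) * (1 + z)" by (simp add: algebra_simps)
  thus ?thesis using True nz unfolding sgn_re_def tcoef_def by (simp add: field_simps)
next
  case False
  hence nz: "1 - z \<noteq> 0" by (auto simp: complex_eq_iff)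
  have "1 - z * z = (1 - z) * (1 + z)" by (simp add: algebra_simps)
  thus ?thesis using False nz unfolding sgn_re_def tcoef_def by (simp add: field_simps)
qed

lemma tcoef_le: "cmod (tcoef z) \<le> 1"
proof (cases "0 \<le> Re z")
  case True
  have "1 \<le> Re (1 + z)" using True by simp
  also have "\<dots> \<le> cmod (1 + z)" by (rule complex_Re_le_cmod)
  finally have "1 \<le> cmod (1 + z)" .
  thus ?thesis using True unfolding tcoef_def by (simp add: norm_divide divide_le_eq)
next
  case False
  have "1 \<le> Re (1 - z)" using False by simp
  also have "\<dots> \<le> cmod (1 - z)" by (rule complex_Re_le_cmod)
  finally have "1 \<le> cmod (1 - z)" .
  thus ?thesis using False unfolding tcoef_def by (simp add: norm_divide divide_le_eq)
qed

lemma conj_mult: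
  assumes U: "unitary_mat n U" and X: "X \<in> carrier_mat n n" and Y: "Y \<in> carrier_mat n n"
  shows "(U * X * mat_adjoint U) * (U * Y * mat_adjoint U) = U * (X * Y) * mat_adjoint U"
proof -
  have Uc: "U \<in> carrier_mat n n" and u2: "mat_adjoint U * U = 1\<^sub>m n"
    using U unfolding unitary_mat_def by auto
  have "(U * X * mat_adjoint U) * (U * Y * mat_adjoint U) = U * (X * ((mat_adjoint U * U) * (Y * mat_adjoint U)))"
    using Uc X Y by (simp add: assoc_mult_mat[of _ n n _ n _ n])
  also have "\<dots> = U * (X * (Y * mat_adjoint U))" using u2 Uc Y by simp
  also have "\<dots> = U * (X * Y) * mat_adjoint U" using Uc X Y
    by (simp add: assoc_mult_mat[of _ n n _ n _ n])
  finally show ?thesis .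
qed

lemma conj_minus:
  assumes U: "unitary_mat n U" and X: "X \<in> carrier_mat n n" and Y: "Y \<in> carrier_mat n n"
  shows "(U * X * mat_adjoint U) - (U * Y * mat_adjoint U) = U * (X - Y) * mat_adjoint U"
proof -
  have Uc: "U \<in> carrier_mat n n" using U unfolding unitary_mat_def by auto
  have "U * (X - Y) = U * X - U * Y" using Uc X Y by (simp add: mult_minus_distrib_mat)
  hence "U * (X - Y) * mat_adjoint U = (U * X - U * Y) * mat_adjoint U" by simp
  also have "\<dots> = U * X * mat_adjoint U - U * Y * mat_adjoint U"
    using Uc X Y by (simp add: minus_mult_distrib_mat[of _ n n _ _ n])
  finally show ?thesis by simp
qed

lemma conj_one:
  assumes U: "unitary_mat n U"
  shows "U * 1\<^sub>m n * mat_adjoint U = 1\<^sub>m n"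
  using U unfolding unitary_mat_def by auto

lemma unitary_dg_abs:
  assumes "unitary_mat n (dg n f)" "i < n"
  shows "cmod (f i) = 1"
proof -
  have "(dg n f * mat_adjoint (dg n f)) $$ (i,i) = 1" using assms unfolding unitary_mat_def by simp
  hence "f i * cnj (f i) = 1" using assms(2) by (simp add: dg_mult_dg)
  hence "complex_of_real ((cmod (f i))\<^sup>2) = 1" by (simp only: complex_norm_square)
  hence "(cmod (f i))\<^sup>2 = 1" by (simp only: of_real_eq_1_iff)
  thus ?thesis using norm_ge_zero[of "f i"] by (simp add: power2_eq_1_iff)
qed

theorem proposition1p4:
  fixes d :: nat and A :: "complex mat"
  assumes "unitary_mat d A"
  shows "\<exists>B. unitary_mat d B \<and> B * B = 1\<^sub>m d \<and>
           (\<forall>N. unitarily_invariant_norm d N \<longrightarrow> N (B - A) \<le> N (1\<^sub>m d - A * A))"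
proof -
  obtain U f where U: "unitary_mat d U" and Aeq: "A = U * dg d f * mat_adjoint U"
    using spectral_unitary[OF assms] by blast
  have Uc: "U \<in> carrier_mat d d" using U unitary_carrier by auto
  define E where "E = dg d (\<lambda>i. sgn_re (f i))"
  define B where "B = U * E * mat_adjoint U"
  have EU: "unitary_mat d E" unfolding E_def by (rule unitary_dg) (auto simp: sgn_re_def)
  have BU: "unitary_mat d B" unfolding B_def by (intro unitary_mult unitary_adj U EU)
  have "E * E = dg d (\<lambda>_. 1)" unfolding E_def dg_mult_dg
    by (rule arg_cong[of _ _ "dg d"]) (auto simp: sgn_re_def)
  hence "B * B = U * 1\<^sub>m d * mat_adjoint U" unfolding B_def
    by (simp add: conj_mult[OF U] E_def dg_one)
  hence BB: "B * B = 1\<^sub>m d" using conj_one[OF U] by simp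
  define Y where "Y = dg d (\<lambda>i. 1 - f i * f i)"
  define T where "T = dg d (\<lambda>i. tcoef (f i))"
  have BA: "B - A = U * (T * Y) * mat_adjoint U"
  proof -
    have "B - A = U * (E - dg d f) * mat_adjoint U"
      unfolding B_def Aeq by (rule conj_minus[OF U]) (auto simp: E_def)
    also have "E - dg d f = T * Y"
      unfolding E_def T_def Y_def dg_minus dg_mult_dg
      by (rule arg_cong[of _ _ "dg d"]) (auto simp: tcoef_eq)
    finally show ?thesis .
  qed
  have AA: "1\<^sub>m d - A * A = U * Y * mat_adjoint U"
  proof -
    have "A * A = U * (dg d f * dg d f) * mat_adjoint U"
      unfolding Aeq by (rule conj_mult[OF U]) auto
    hence "1\<^sub>m d - A * A = U * 1\<^sub>m d * mat_adjoint U - U * (dg d f * dg d f) * mat_adjoint U"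
      using conj_one[OF U] by simp
    also have "\<dots> = U * (1\<^sub>m d - dg d f * dg d f) * mat_adjoint U"
      by (rule conj_minus[OF U]) auto
    also have "1\<^sub>m d - dg d f * dg d f = Y"
      unfolding Y_def dg_one[symmetric] dg_mult_dg dg_minus ..
    finally show ?thesis .
  qed
  have "N (B - A) \<le> N (1\<^sub>m d - A * A)" if N: "unitarily_invariant_norm d N" for N
  proof -
    have Yc: "Y \<in> carrier_mat d d" unfolding Y_def by simp
    have "N (B - A) = N (T * Y)" unfolding BA
      by (rule uin_conj[OF N U]) (simp add: T_def Y_def dg_mult_dg)
    also have "\<dots> \<le> N Y" unfolding T_def by (rule contraction[OF N Yc]) (rule tcoef_le)
    also have "\<dots> = N (1\<^sub>m d - A * A)" unfolding AA by (rule uin_conj[OF N U Yc, symmetric])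
    finally show ?thesis .
  qed
  thus ?thesis using BU BB by blast
qed


end
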